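(* Let $G$ be a finite connected graph with maximum degree at most $\Delta$, where $\Delta\ge2$, and with diameter $D=\mathrm{diam}(G)\ge2$ in the hop metric. Then, under geodesic routing, every vertex $v$ of $G$ satisfies $$T(v)\le \Delta^2(\Delta-1)^{D-2}D^2.$$
   Context: Geodesic routing and vertex flow on a finite connected graph $G$: $d$ denotes the hop (graph) metric; for each unordered pair of distinct vertices $\{v,w\}$ one unit of flow is sent from $v$ to $w$ along shortest paths, where at each vertex $v'$ on a shortest path the flow arriving at $v'$ is split equally among the neighbors $x$ of $v'$ with $d(x,w)=d(v',w)-1$. The vertex flow $T(u)$ of a vertex $u$ is the total flow (over all pairs, including pairs having $u$ as an endpoint) passing through $u$. *)

theory Defs
  imports Complex_Main
begin

definition simple_graph :: "'a set \<Rightarrow> ('a \<Rightarrow> 'a \<Rightarrow> bool) \<Rightarrow> bool" where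
  "simple_graph V E \<longleftrightarrow> finite V \<and> (\<forall>x y. E x y \<longrightarrow> x \<in> V \<and> y \<in> V)
     \<and> (\<forall>x y. E x y \<longrightarrow> E y x) \<and> (\<forall>x. \<not> E x x)"

definition is_walk :: "'a set \<Rightarrow> ('a \<Rightarrow> 'a \<Rightarrow> bool) \<Rightarrow> 'a \<Rightarrow> 'a \<Rightarrow> nat \<Rightarrow> 'a list \<Rightarrow> bool" where
  "is_walk V E v w n xs \<longleftrightarrow> xs \<noteq> [] \<and> hd xs = v \<and> last xs = w \<and> length xs = Suc n
     \<and> set xs \<subseteq> V \<and> successively E xs"

definition connected_graph :: "'a set \<Rightarrow> ('a \<Rightarrow> 'a \<Rightarrow> bool) \<Rightarrow> bool" where
  "connected_graph V E \<longleftrightarrow> V \<noteq> {} \<and> (\<forall>v\<in>V. \<forall>w\<in>V. \<exists>n xs. is_walk V E v w n xs)"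

definition hop_dist :: "'a set \<Rightarrow> ('a \<Rightarrow> 'a \<Rightarrow> bool) \<Rightarrow> 'a \<Rightarrow> 'a \<Rightarrow> nat" where
  "hop_dist V E v w = (LEAST n. \<exists>xs. is_walk V E v w n xs)"

definition diameter :: "'a set \<Rightarrow> ('a \<Rightarrow> 'a \<Rightarrow> bool) \<Rightarrow> nat" where
  "diameter V E = Max {hop_dist V E v w | v w. v \<in> V \<and> w \<in> V}"

definition degree :: "'a set \<Rightarrow> ('a \<Rightarrow> 'a \<Rightarrow> bool) \<Rightarrow> 'a \<Rightarrow> nat" where
  "degree V E x = card {y \<in> V. E x y}"

definition next_hops :: "'a set \<Rightarrow> ('a \<Rightarrow> 'a \<Rightarrow> bool) \<Rightarrow> 'a \<Rightarrow> 'a \<Rightarrow> 'a set" where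
  "next_hops V E x w = {y \<in> V. E x y \<and> hop_dist V E y w + 1 = hop_dist V E x w}"

text \<open>flow_level V E v w k u: flow (of the unit sent from v to w) arriving at a vertex u
  that is k steps along a geodesic from v (i.e. hop_dist u w = hop_dist v w - k).\<close>
primrec flow_level :: "'a set \<Rightarrow> ('a \<Rightarrow> 'a \<Rightarrow> bool) \<Rightarrow> 'a \<Rightarrow> 'a \<Rightarrow> nat \<Rightarrow> 'a \<Rightarrow> real" where
  "flow_level V E v w 0 u = (if u = v then 1 else 0)"
| "flow_level V E v w (Suc k) u =
     (\<Sum>p\<in>{p \<in> V. E p u \<and> hop_dist V E p w = hop_dist V E u w + 1}.
        flow_level V E v w k p / real (card (next_hops V E p w)))"

definition pair_flow :: "'a set \<Rightarrow> ('a \<Rightarrow> 'a \<Rightarrow> bool) \<Rightarrow> 'a \<Rightarrow> 'a \<Rightarrow> 'a \<Rightarrow> real" where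
  "pair_flow V E v w u =
     (if u \<in> V \<and> hop_dist V E u w \<le> hop_dist V E v w
      then flow_level V E v w (hop_dist V E v w - hop_dist V E u w) u else 0)"

text \<open>Vertex flow. Each unordered pair {v,w} is sent in the direction selected by the
  orientation ori (ori v w means the unit goes from v to w).\<close>
definition vertex_flow :: "'a set \<Rightarrow> ('a \<Rightarrow> 'a \<Rightarrow> bool) \<Rightarrow> ('a \<Rightarrow> 'a \<Rightarrow> bool) \<Rightarrow> 'a \<Rightarrow> real" where
  "vertex_flow V E ori u =
     (\<Sum>(v, w)\<in>{(v, w). v \<in> V \<and> w \<in> V \<and> v \<noteq> w \<and> ori v w}. pair_flow V E v w u)"

definition orientation :: "'a set \<Rightarrow> ('a \<Rightarrow> 'a \<Rightarrow> bool) \<Rightarrow> bool" where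
  "orientation V ori \<longleftrightarrow> (\<forall>v\<in>V. \<forall>w\<in>V. v \<noteq> w \<longrightarrow> (ori v w \<longleftrightarrow> \<not> ori w v))"

end

theory Submission imports Defs begin

context
  fixes V :: "'a set" and E :: "'a \<Rightarrow> 'a \<Rightarrow> bool"
  assumes sg: "simple_graph V E" and cg: "connected_graph V E"
begin

lemma finV: "finite V" using sg by (simp add: simple_graph_def)
lemma EV: "E x y \<Longrightarrow> x \<in> V \<and> y \<in> V" using sg by (simp add: simple_graph_def)
lemma Esym: "E x y \<Longrightarrow> E y x" using sg by (simp add: simple_graph_def)
lemma Eirr: "\<not> E x x" using sg by (simp add: simple_graph_def)


lemma walk_dist: assumes "v \<in> V" "w \<in> V" shows "\<exists>xs. is_walk V E v w (hop_dist V E v w) xs"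
proof -
  from cg assms have "\<exists>n xs. is_walk V E v w n xs" by (auto simp: connected_graph_def)
  thus ?thesis unfolding hop_dist_def by (rule LeastI_ex)
qed

lemma dist_le: "is_walk V E v w n xs \<Longrightarrow> hop_dist V E v w \<le> n"
  unfolding hop_dist_def by (rule Least_le) blast

lemma dist_self: "v \<in> V \<Longrightarrow> hop_dist V E v v = 0"
proof -
  assume "v \<in> V"
  hence "is_walk V E v v 0 [v]" by (simp add: is_walk_def)
  thus ?thesis using dist_le by fastforce
qed

lemma dist0: assumes "v \<in> V" "w \<in> V" "hop_dist V E v w = 0" shows "v = w"
proof -
  obtain xs where "is_walk V E v w 0 xs" using walk_dist[OF assms(1,2)] assms(3) by auto
  thus ?thesis by (cases xs) (auto simp: is_walk_def)
qed

lemma dist_sym: assumes "v \<in> V" "w \<in> V" shows "hop_dist V E v w = hop_dist V E w v"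
proof -
  have r: "is_walk V E b a n (rev xs)" if "is_walk V E a b n xs" for a b n xs
    using that by (auto simp: is_walk_def hd_rev last_rev successively_rev
        intro: successively_mono[where P=E] Esym)
  obtain xs where "is_walk V E v w (hop_dist V E v w) xs" using walk_dist assms by blast
  then have 1: "hop_dist V E w v \<le> hop_dist V E v w" using r dist_le by blast
  obtain ys where "is_walk V E w v (hop_dist V E w v) ys" using walk_dist assms by blast
  then have 2: "hop_dist V E v w \<le> hop_dist V E w v" using r dist_le by blast
  from 1 2 show ?thesis by simp
qed

lemma dist_step: assumes "v \<in> V" "E p u" shows "hop_dist V E v u \<le> hop_dist V E v p + 1"
proof -
  have pV: "p \<in> V" "u \<in> V" using EV assms by auto
  obtain xs where xs: "is_walk V E v p (hop_dist V E v p) xs" using walk_dist assms pV by blast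
  hence "is_walk V E v u (hop_dist V E v p + 1) (xs @ [u])"
    using assms pV by (auto simp: is_walk_def successively_append_iff)
  thus ?thesis by (rule dist_le)
qed

lemma dist_pred: assumes "v \<in> V" "w \<in> V" "hop_dist V E v w = Suc i"
  shows "\<exists>y\<in>V. E y w \<and> hop_dist V E v y = i"
proof -
  obtain xs where xs: "is_walk V E v w (Suc i) xs" using walk_dist assms by fastforce
  define ys where "ys = butlast xs"
  have len: "length xs = Suc (Suc i)" and ne: "xs \<noteq> []" using xs by (auto simp: is_walk_def)
  have ysne: "ys \<noteq> []" using len unfolding ys_def by (metis length_butlast len diff_Suc_1 list.size(3) nat.distinct(1))
  have xsys: "xs = ys @ [w]" using xs ne unfolding ys_def is_walk_def by (metis append_butlast_last_id)
  have "hd ys = v" using xs xsys ysne by (auto simp: is_walk_def)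
  moreover have "successively E ys" "E (last ys) w" using xs xsys ysne
    by (auto simp: is_walk_def successively_append_iff)
  moreover have "set ys \<subseteq> V" using xs xsys by (auto simp: is_walk_def)
  moreover have "length ys = Suc i" using len ys_def by simp
  ultimately have w1: "is_walk V E v (last ys) i ys" "E (last ys) w" using ysne by (auto simp: is_walk_def)
  have le: "hop_dist V E v (last ys) \<le> i" using w1 dist_le by blast
  have "Suc i \<le> hop_dist V E v (last ys) + 1" using dist_step[OF assms(1) w1(2)] assms(3) by simp
  with le have "hop_dist V E v (last ys) = i" by simp
  moreover have "last ys \<in> V" using EV w1 by blast
  ultimately show ?thesis using w1 by blast
qed

lemma dist_le_diam: assumes "v \<in> V" "w \<in> V" shows "hop_dist V E v w \<le> diameter V E"
proof -
  have "{hop_dist V E v w | v w. v \<in> V \<and> w \<in> V} = (\<lambda>(v,w). hop_dist V E v w) ` (V \<times> V)" by auto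
  hence fin: "finite {hop_dist V E v w | v w. v \<in> V \<and> w \<in> V}" using finV by simp
  show ?thesis unfolding diameter_def by (rule Max_ge[OF fin]) (use assms in blast)
qed

lemma flow_nonneg: "flow_level V E v w k x \<ge> 0"
  by (induction k arbitrary: x) (auto intro!: sum_nonneg divide_nonneg_nonneg)

lemma flow_sum: assumes "v \<in> V" shows "(\<Sum>x\<in>V. flow_level V E v w k x) \<le> 1"
proof (induction k)
  case 0
  have "(\<Sum>x\<in>V. flow_level V E v w 0 x) = (\<Sum>x\<in>V. if x = v then 1 else 0)" by simp
  also have "\<dots> = 1" using assms finV by (simp add: sum.delta)
  finally show ?case by simp
next
  case (Suc k)
  define R where "R = (\<lambda>p x. E p x \<and> hop_dist V E p w = hop_dist V E x w + 1)"
  define g where "g = (\<lambda>p. flow_level V E v w k p / real (card (next_hops V E p w)))"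
  have "(\<Sum>x\<in>V. flow_level V E v w (Suc k) x) = (\<Sum>x\<in>V. \<Sum>p\<in>{p. p \<in> V \<and> R p x}. g p)"
    by (simp add: R_def g_def)
  also have "\<dots> = (\<Sum>p\<in>V. \<Sum>x\<in>{x. x \<in> V \<and> R p x}. g p)"
    by (rule sum.swap_restrict[OF finV finV, symmetric])
  also have "\<dots> = (\<Sum>p\<in>V. real (card (next_hops V E p w)) * g p)"
  proof (rule sum.cong[OF refl])
    fix p assume "p \<in> V"
    have "{x. x \<in> V \<and> R p x} = next_hops V E p w" by (auto simp: R_def next_hops_def)
    thus "(\<Sum>x\<in>{x. x \<in> V \<and> R p x}. g p) = real (card (next_hops V E p w)) * g p" by simp
  qed
  also have "\<dots> \<le> (\<Sum>p\<in>V. flow_level V E v w k p)"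
  proof (rule sum_mono)
    fix p assume "p \<in> V"
    show "real (card (next_hops V E p w)) * g p \<le> flow_level V E v w k p"
      using flow_nonneg[of v w k p] by (cases "card (next_hops V E p w) = 0") (auto simp: g_def)
  qed
  also have "\<dots> \<le> 1" by (rule Suc.IH)
  finally show ?case .
qed

lemma flow_le1: assumes "v \<in> V" "x \<in> V" shows "flow_level V E v w k x \<le> 1"
proof -
  have "flow_level V E v w k x \<le> (\<Sum>x\<in>V. flow_level V E v w k x)"
    by (rule member_le_sum[OF assms(2)]) (auto intro: flow_nonneg finV)
  thus ?thesis using flow_sum[OF assms(1), where w=w and k=k] by simp
qed

lemma flow_supp: assumes "v \<in> V" shows "flow_level V E v w k x \<noteq> 0 \<Longrightarrow> x \<in> V \<and> hop_dist V E v x \<le> k"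
proof (induction k arbitrary: x)
  case 0
  then show ?case using assms dist_self by (auto split: if_splits)
next
  case (Suc k)
  from Suc.prems obtain p where p: "p \<in> V" "E p x"
    "flow_level V E v w k p / real (card (next_hops V E p w)) \<noteq> 0"
    by (auto elim!: sum.not_neutral_contains_not_neutral)
  hence "flow_level V E v w k p \<noteq> 0" by auto
  from Suc.IH[OF this] have "hop_dist V E v p \<le> k" by simp
  moreover have "x \<in> V" using EV p by blast
  moreover have "hop_dist V E v x \<le> hop_dist V E v p + 1" by (rule dist_step[OF assms p(2)])
  ultimately show ?case by simp
qed

lemma sphere1: assumes "u \<in> V" and that: "\<forall>x\<in>V. degree V E x \<le> \<Delta>'" shows "card {x\<in>V. hop_dist V E u x = 1} \<le> \<Delta>'"
proof -
  have "{x\<in>V. hop_dist V E u x = 1} \<subseteq> {y\<in>V. E u y}"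
  proof
    fix x assume "x \<in> {x\<in>V. hop_dist V E u x = 1}"
    then obtain y where "y\<in>V" "E y x" "hop_dist V E u y = 0" "x \<in> V"
      using dist_pred[OF assms(1), of x 0] by auto
    then show "x \<in> {y\<in>V. E u y}" using dist0[OF assms(1)] by auto
  qed
  hence "card {x\<in>V. hop_dist V E u x = 1} \<le> card {y\<in>V. E u y}" by (rule card_mono[rotated]) (simp add: finV)
  also have "\<dots> \<le> \<Delta>'" using that assms by (auto simp: degree_def)
  finally show ?thesis .
qed

lemma sphere_step: assumes "u \<in> V" "i \<ge> 1" "\<forall>x\<in>V. degree V E x \<le> \<Delta>'"
  shows "card {x\<in>V. hop_dist V E u x = Suc i} \<le> card {x\<in>V. hop_dist V E u x = i} * (\<Delta>' - 1)"
proof -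
  let ?S = "\<lambda>i. {x\<in>V. hop_dist V E u x = i}"
  have sub: "?S (Suc i) \<subseteq> (\<Union>y\<in>?S i. {z\<in>V. E y z \<and> hop_dist V E u z = Suc i})"
  proof
    fix z assume "z \<in> ?S (Suc i)"
    then obtain y where "y\<in>V" "E y z" "hop_dist V E u y = i" "z \<in> V" "hop_dist V E u z = Suc i"
      using dist_pred[OF assms(1)] by blast
    thus "z \<in> (\<Union>y\<in>?S i. {z\<in>V. E y z \<and> hop_dist V E u z = Suc i})" by blast
  qed
  have each: "card {z\<in>V. E y z \<and> hop_dist V E u z = Suc i} \<le> \<Delta>' - 1" if y: "y \<in> ?S i" for y
  proof -
    obtain j where j: "i = Suc j" using assms(2) by (cases i) auto
    obtain p where p: "p\<in>V" "E p y" "hop_dist V E u p = j" using dist_pred[OF assms(1), of y j] y j by auto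
    have "{z\<in>V. E y z \<and> hop_dist V E u z = Suc i} \<subseteq> {z\<in>V. E y z} - {p}" using p j by auto
    hence "card {z\<in>V. E y z \<and> hop_dist V E u z = Suc i} \<le> card ({z\<in>V. E y z} - {p})"
      by (rule card_mono[rotated]) (simp add: finV)
    also have "\<dots> = card {z\<in>V. E y z} - 1" using p Esym by (simp add: finV)
    also have "\<dots> \<le> \<Delta>' - 1" using assms(3) y by (auto simp: degree_def)
    finally show ?thesis .
  qed
  have "card (?S (Suc i)) \<le> card (\<Union>y\<in>?S i. {z\<in>V. E y z \<and> hop_dist V E u z = Suc i})"
    by (rule card_mono[OF _ sub]) (simp add: finV)
  also have "\<dots> \<le> (\<Sum>y\<in>?S i. card {z\<in>V. E y z \<and> hop_dist V E u z = Suc i})"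
    by (rule card_UN_le) (simp add: finV)
  also have "\<dots> \<le> (\<Sum>y\<in>?S i. \<Delta>' - 1)" by (rule sum_mono) (rule each)
  also have "\<dots> = card (?S i) * (\<Delta>' - 1)" by simp
  finally show ?thesis .
qed

lemma sphere_bound: assumes "u \<in> V" "i \<ge> 1" "\<forall>x\<in>V. degree V E x \<le> \<Delta>'"
  shows "card {x\<in>V. hop_dist V E u x = i} \<le> \<Delta>' * (\<Delta>' - 1) ^ (i - 1)"
  using assms(2)
proof (induction i rule: dec_induct)
  case base
  then show ?case using sphere1[OF assms(1) assms(3)] by simp
next
  case (step n)
  have "card {x\<in>V. hop_dist V E u x = Suc n} \<le> card {x\<in>V. hop_dist V E u x = n} * (\<Delta>' - 1)"
    by (rule sphere_step[OF assms(1) step(1) assms(3)])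
  also have "\<dots> \<le> \<Delta>' * (\<Delta>' - 1) ^ (n - 1) * (\<Delta>' - 1)" using step(3) by simp
  also have "\<dots> = \<Delta>' * (\<Delta>' - 1) ^ (Suc n - 1)" using step(1)
    by (cases n) (auto simp: mult.assoc)
  finally show ?case .
qed

end

theorem mainTheorem3:
  fixes V :: "'a set" and E :: "'a \<Rightarrow> 'a \<Rightarrow> bool" and \<Delta> :: nat
    and ori :: "'a \<Rightarrow> 'a \<Rightarrow> bool" and u :: 'a
  assumes "simple_graph V E"
    and "connected_graph V E"
    and "\<forall>x\<in>V. degree V E x \<le> \<Delta>"
    and "\<Delta> \<ge> 2"
    and "diameter V E \<ge> 2"
    and "orientation V ori"
    and "u \<in> V"
  shows "vertex_flow V E ori u
           \<le> real \<Delta> ^ 2 * (real \<Delta> - 1) ^ (diameter V E - 2) * real (diameter V E) ^ 2"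
proof -
  note sg = assms(1) and cg = assms(2) and deg = assms(3) and uV = assms(7)
  define D where "D = diameter V E"
  define d where "d = hop_dist V E"
  define K where "K = \<Delta> ^ 2 * (\<Delta> - 1) ^ (D - 2)"
  define S where "S = (\<lambda>i. {x\<in>V. d u x = i})"
  define A where "A = {(v, w). v \<in> V \<and> w \<in> V \<and> v \<noteq> w \<and> ori v w}"
  define B where "B = {p\<in>A. d (fst p) u + d u (snd p) \<le> D}"
  have fin: "finite V" using finV[OF sg cg] .
  have finA: "finite A" by (rule finite_subset[of _ "V \<times> V"]) (auto simp: A_def fin)
  have BA: "B \<subseteq> A" by (auto simp: B_def)
  have D2: "D \<ge> 2" using assms(5) D_def by simp
  have Sb: "card (S i) \<le> \<Delta> * (\<Delta> - 1) ^ (i - 1)" if "i \<ge> 1" for i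
    unfolding S_def d_def by (rule sphere_bound[OF sg cg uV that deg])
  have pf01: "0 \<le> pair_flow V E v w u \<and> pair_flow V E v w u \<le> 1" if "v \<in> V" for v w
    using flow_nonneg[OF sg cg] flow_le1[OF sg cg that] by (auto simp: pair_flow_def)
  have pfsupp: "(v, w) \<in> B" if "(v, w) \<in> A" "pair_flow V E v w u \<noteq> 0" for v w
  proof -
    have vV: "v \<in> V" "w \<in> V" using that by (auto simp: A_def)
    have c: "d u w \<le> d v w" and f: "flow_level V E v w (d v w - d u w) u \<noteq> 0"
      using that(2) by (auto simp: pair_flow_def d_def split: if_splits)
    have "d v u \<le> d v w - d u w" using flow_supp[OF sg cg vV(1) f[unfolded d_def]] by (simp add: d_def)
    moreover have "d v w \<le> D" using dist_le_diam[OF sg cg vV] by (simp add: d_def D_def)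
    ultimately show ?thesis using that(1) c by (simp add: B_def)
  qed
  have "vertex_flow V E ori u = (\<Sum>(v, w)\<in>A. pair_flow V E v w u)" by (simp add: vertex_flow_def A_def)
  also have "\<dots> = (\<Sum>(v, w)\<in>B. pair_flow V E v w u)"
    by (rule sum.mono_neutral_right[OF finA BA]) (use pfsupp in auto)
  also have "\<dots> \<le> (\<Sum>(v, w)\<in>B. 1)"
    by (rule sum_mono) (use pf01 BA in \<open>auto simp: A_def\<close>)
  also have "\<dots> = real (card B)" by simp
  finally have step1: "vertex_flow V E ori u \<le> real (card B)" .
  define B1 where "B1 = {p\<in>A. fst p = u \<or> snd p = u}"
  define B2 where "B2 = {(v, w). v \<in> V \<and> w \<in> V \<and> v \<noteq> u \<and> w \<noteq> u \<and> d v u + d u w \<le> D}"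
  have finB1: "finite B1" using finA by (simp add: B1_def)
  have finB2: "finite B2" by (rule finite_subset[of _ "V \<times> V"]) (auto simp: B2_def fin)
  have "B \<subseteq> B1 \<union> B2" by (auto simp: B_def B1_def B2_def A_def)
  hence "card B \<le> card (B1 \<union> B2)" using finB1 finB2 by (simp add: card_mono)
  also have "\<dots> \<le> card B1 + card B2" by (rule card_Un_le)
  finally have cB: "card B \<le> card B1 + card B2" .
  have "card B1 \<le> card (V - {u})"
  proof (rule card_inj_on_le[where f="\<lambda>(v, w). if v = u then w else v"])
    show "inj_on (\<lambda>(v, w). if v = u then w else v) B1"
      using assms(6) by (auto simp: inj_on_def B1_def A_def orientation_def)
    show "(\<lambda>(v, w). if v = u then w else v) ` B1 \<subseteq> V - {u}" by (auto simp: B1_def A_def)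
    show "finite (V - {u})" using fin by simp
  qed
  also have "\<dots> \<le> card (\<Union>j\<in>{1..D}. S j)"
  proof (rule card_mono)
    show "finite (\<Union>j\<in>{1..D}. S j)" using fin by (auto simp: S_def)
    show "V - {u} \<subseteq> (\<Union>j\<in>{1..D}. S j)"
    proof
      fix x assume x: "x \<in> V - {u}"
      have "d u x \<noteq> 0" using dist0[OF sg cg uV, of x] x by (auto simp: d_def)
      moreover have "d u x \<le> D" using dist_le_diam[OF sg cg uV, of x] x by (simp add: d_def D_def)
      ultimately show "x \<in> (\<Union>j\<in>{1..D}. S j)" using x by (auto simp: S_def)
    qed
  qed
  also have "\<dots> \<le> (\<Sum>j\<in>{1..D}. card (S j))" by (rule card_UN_le) simp
  also have "\<dots> \<le> (\<Sum>j\<in>{1..D}. K)"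
  proof (rule sum_mono)
    fix j assume j: "j \<in> {1..D}"
    have "card (S j) \<le> \<Delta> * (\<Delta> - 1) ^ (j - 1)" using Sb j by simp
    also have "\<dots> \<le> \<Delta> * (\<Delta> - 1) ^ (D - 1)"
      using j assms(4) by (intro mult_le_mono2 power_increasing) auto
    also have "\<dots> = \<Delta> * (\<Delta> - 1) * (\<Delta> - 1) ^ (D - 2)"
      using D2 by (metis Suc_diff_Suc Suc_1 Suc_le_lessD mult.assoc power_Suc diff_Suc_1)
    also have "\<dots> \<le> K" unfolding K_def power2_eq_square by (intro mult_le_mono1 mult_le_mono2) simp
    finally show "card (S j) \<le> K" .
  qed
  also have "\<dots> = D * K" by simp
  finally have cB1: "card B1 \<le> D * K" .
  define I where "I = {p \<in> {1..D-1} \<times> {1..D-1}. fst p + snd p \<le> D}"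
  have finI: "finite I" by (simp add: I_def)
  have "B2 \<subseteq> (\<Union>p\<in>I. S (fst p) \<times> S (snd p))"
  proof
    fix q assume q: "q \<in> B2"
    obtain v w where vw: "q = (v, w)" by fastforce
    have vV: "v \<in> V" "w \<in> V" "v \<noteq> u" "w \<noteq> u" and s: "d v u + d u w \<le> D" using q vw by (auto simp: B2_def)
    have sym: "d v u = d u v" using dist_sym[OF sg cg vV(1) uV] by (simp add: d_def)
    have "d u v \<noteq> 0" using dist0[OF sg cg uV vV(1)] vV(3) by (auto simp: d_def)
    moreover have "d u w \<noteq> 0" using dist0[OF sg cg uV vV(2)] vV(4) by (auto simp: d_def)
    ultimately have "(d u v, d u w) \<in> I" using s sym by (auto simp: I_def)
    thus "q \<in> (\<Union>p\<in>I. S (fst p) \<times> S (snd p))" using vw vV by (auto simp: S_def intro!: bexI[of _ "(d u v, d u w)"])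
  qed
  hence "card B2 \<le> card (\<Union>p\<in>I. S (fst p) \<times> S (snd p))"
    by (rule card_mono[rotated]) (use finI fin in \<open>auto simp: S_def\<close>)
  also have "\<dots> \<le> (\<Sum>p\<in>I. card (S (fst p) \<times> S (snd p)))" by (rule card_UN_le[OF finI])
  also have "\<dots> \<le> (\<Sum>p\<in>I. K)"
  proof (rule sum_mono)
    fix p assume p: "p \<in> I"
    obtain i j where ij: "p = (i, j)" by fastforce
    have i: "i \<ge> 1" "j \<ge> 1" "i + j \<le> D" using p ij by (auto simp: I_def)
    have "card (S (fst p) \<times> S (snd p)) = card (S i) * card (S j)" using ij by (simp add: card_cartesian_product)
    also have "\<dots> \<le> (\<Delta> * (\<Delta> - 1) ^ (i - 1)) * (\<Delta> * (\<Delta> - 1) ^ (j - 1))"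
      using Sb i by (intro mult_le_mono) auto
    also have "\<dots> = \<Delta> ^ 2 * (\<Delta> - 1) ^ ((i - 1) + (j - 1))"
      by (simp add: power_add power2_eq_square ac_simps)
    also have "\<dots> \<le> K" unfolding K_def
      using i assms(4) by (intro mult_le_mono2 power_increasing) auto
    finally show "card (S (fst p) \<times> S (snd p)) \<le> K" .
  qed
  also have "\<dots> = card I * K" by simp
  also have "\<dots> \<le> (D - 1) ^ 2 * K"
  proof -
    have "card I \<le> card ({1..D-1} \<times> {1..D-1})" by (rule card_mono) (auto simp: I_def)
    also have "\<dots> = (D - 1) ^ 2" by (simp add: power2_eq_square)
    finally show ?thesis by simp
  qed
  finally have cB2: "card B2 \<le> (D - 1) ^ 2 * K" .
  have arith: "D + (D - 1) ^ 2 \<le> D ^ 2" using D2 by (cases D) (auto simp: power2_eq_square)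
  have "card B \<le> (D + (D - 1) ^ 2) * K" using cB cB1 cB2 by (simp add: add_mult_distrib)
  also have "\<dots> \<le> D ^ 2 * K" using arith by simp
  finally have "card B \<le> D ^ 2 * K" .
  hence "real (card B) \<le> real (D ^ 2 * K)" by (rule of_nat_mono)
  also have "\<dots> = real \<Delta> ^ 2 * (real \<Delta> - 1) ^ (D - 2) * real D ^ 2"
    using assms(4) by (simp add: K_def of_nat_diff)
  finally show ?thesis using step1 by (simp add: D_def)
qed

end
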